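(* Let $G$ be a $6$-regular graph, $\mathcal S$ a canonical path partition of $G$, $P$ a path component, and $X=x_1x_2\cdots x_k$ with $k\ge 2$ a sequence of consecutive vertices of $P$, all in $V_2^b$, such that no vertex of $X$ is joined by a free edge to a dangerous vertex. Then $b(X)\le \frac23(k+2)$.
   Context: All graphs are finite, simple and undirected. A path partition of $G=(V,E)$ is a set of vertex-disjoint paths (single vertices allowed) covering $V$; its members are components. A component with $t\ge3$ vertices is a cycle component if the subgraph induced on its vertex set has a spanning cycle; a one-vertex component is an isolated vertex; every other component is a path component. A path partition is canonical if (1) it has the minimum number of components among all path partitions of $G$; (2) among those, it has the maximum number of cycle components; (3) it has no isolated vertices. Given a canonical path partition $\mathcal S$ of $G$: two vertices are path neighbors if they are consecutive on a path component. An edge of $G$ is a free edge unless it joins two path neighbors or has both endpoints in the same cycle component. $V_1$ is the set of end-vertices of path components together with all vertices of cycle components. The remaining vertices are classified by the first applicable rule: $V_2$: joined by a free edge to a vertex of $V_1$; $V_3$: both path neighbors lie in $V_2$; $V_4$: exactly one path neighbor lies in $V_2$; $V_5$: all others. $V_2^b$ is the set of vertices of $V_2$ having at least one path neighbor in $V_2$. A balanced edge is a free edge with one endpoint in $V_1$ and the other in $V_2$. A vertex of $V_2$ is moderate if it is incident to at least two balanced edges, at least one of whose other endpoints is an end-vertex of a path component; it is heavy if it is incident to at least three balanced edges whose other endpoints are end-vertices of path components. A vertex of $V_3$ is dangerous if one of its path neighbors is heavy and the other is moderate. For $Y\subseteq V_2$, $b(Y)$ is the sum, over all balanced edges $xy$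 with $x\in Y$ and $y\in V_1$, of $2/3$ if $y$ is an end-vertex of a path component, $1/|V(C)|$ if $y$ lies in a cycle component $C$ with $|V(C)|\le 6$, and $0$ if $y$ lies in a cycle component with at least $7$ vertices. *)

theory Defs
  imports Complex_Main
begin

definition graph :: "'a set \<Rightarrow> ('a \<Rightarrow> 'a \<Rightarrow> bool) \<Rightarrow> bool" where
  "graph V E \<longleftrightarrow> finite V \<and> (\<forall>u v. E u v \<longrightarrow> E v u) \<and> (\<forall>u. \<not> E u u)
     \<and> (\<forall>u v. E u v \<longrightarrow> u \<in> V \<and> v \<in> V)"

definition regular :: "'a set \<Rightarrow> ('a \<Rightarrow> 'a \<Rightarrow> bool) \<Rightarrow> nat \<Rightarrow> bool" where
  "regular V E d \<longleftrightarrow> (\<forall>v\<in>V. card {u. E v u} = d)"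

definition is_path :: "('a \<Rightarrow> 'a \<Rightarrow> bool) \<Rightarrow> 'a list \<Rightarrow> bool" where
  "is_path E p \<longleftrightarrow> p \<noteq> [] \<and> distinct p \<and> (\<forall>i. Suc i < length p \<longrightarrow> E (p!i) (p!Suc i))"

definition path_partition :: "'a set \<Rightarrow> ('a \<Rightarrow> 'a \<Rightarrow> bool) \<Rightarrow> 'a list set \<Rightarrow> bool" where
  "path_partition V E S \<longleftrightarrow>
     (\<forall>p\<in>S. is_path E p \<and> set p \<subseteq> V)
   \<and> (\<forall>p\<in>S. \<forall>q\<in>S. p \<noteq> q \<longrightarrow> set p \<inter> set q = {})
   \<and> \<Union> (set ` S) = V"

definition spanning_cycle :: "('a \<Rightarrow> 'a \<Rightarrow> bool) \<Rightarrow> 'a set \<Rightarrow> bool" where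
  "spanning_cycle E A \<longleftrightarrow> (\<exists>c. distinct c \<and> set c = A \<and> length c \<ge> 3
      \<and> (\<forall>i. Suc i < length c \<longrightarrow> E (c!i) (c!Suc i)) \<and> E (last c) (hd c))"

definition cycle_comp :: "('a \<Rightarrow> 'a \<Rightarrow> bool) \<Rightarrow> 'a list \<Rightarrow> bool" where
  "cycle_comp E p \<longleftrightarrow> length p \<ge> 3 \<and> spanning_cycle E (set p)"

definition path_comp :: "('a \<Rightarrow> 'a \<Rightarrow> bool) \<Rightarrow> 'a list \<Rightarrow> bool" where
  "path_comp E p \<longleftrightarrow> length p \<ge> 2 \<and> \<not> cycle_comp E p"

definition num_cycles :: "('a \<Rightarrow> 'a \<Rightarrow> bool) \<Rightarrow> 'a list set \<Rightarrow> nat" where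
  "num_cycles E S = card {p\<in>S. cycle_comp E p}"

definition canonical :: "'a set \<Rightarrow> ('a \<Rightarrow> 'a \<Rightarrow> bool) \<Rightarrow> 'a list set \<Rightarrow> bool" where
  "canonical V E S \<longleftrightarrow> path_partition V E S
     \<and> (\<forall>S'. path_partition V E S' \<longrightarrow> card S \<le> card S')
     \<and> (\<forall>S'. path_partition V E S' \<and> card S' = card S \<longrightarrow> num_cycles E S' \<le> num_cycles E S)
     \<and> (\<forall>p\<in>S. length p \<noteq> 1)"

definition path_nbr :: "('a \<Rightarrow> 'a \<Rightarrow> bool) \<Rightarrow> 'a list set \<Rightarrow> 'a \<Rightarrow> 'a \<Rightarrow> bool" where
  "path_nbr E S u v \<longleftrightarrow> (\<exists>p\<in>S. path_comp E p \<and> (\<exists>i. Suc i < length p \<and>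
      ((p!i = u \<and> p!Suc i = v) \<or> (p!i = v \<and> p!Suc i = u))))"

definition same_cycle :: "('a \<Rightarrow> 'a \<Rightarrow> bool) \<Rightarrow> 'a list set \<Rightarrow> 'a \<Rightarrow> 'a \<Rightarrow> bool" where
  "same_cycle E S u v \<longleftrightarrow> (\<exists>p\<in>S. cycle_comp E p \<and> u \<in> set p \<and> v \<in> set p)"

definition free_edge :: "('a \<Rightarrow> 'a \<Rightarrow> bool) \<Rightarrow> 'a list set \<Rightarrow> 'a \<Rightarrow> 'a \<Rightarrow> bool" where
  "free_edge E S u v \<longleftrightarrow> E u v \<and> \<not> path_nbr E S u v \<and> \<not> same_cycle E S u v"

definition end_vertex :: "('a \<Rightarrow> 'a \<Rightarrow> bool) \<Rightarrow> 'a list set \<Rightarrow> 'a \<Rightarrow> bool" where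
  "end_vertex E S v \<longleftrightarrow> (\<exists>p\<in>S. path_comp E p \<and> (v = hd p \<or> v = last p))"

definition in_cycle :: "('a \<Rightarrow> 'a \<Rightarrow> bool) \<Rightarrow> 'a list set \<Rightarrow> 'a \<Rightarrow> bool" where
  "in_cycle E S v \<longleftrightarrow> (\<exists>p\<in>S. cycle_comp E p \<and> v \<in> set p)"

definition V1 :: "('a \<Rightarrow> 'a \<Rightarrow> bool) \<Rightarrow> 'a list set \<Rightarrow> 'a set" where
  "V1 E S = {v. end_vertex E S v \<or> in_cycle E S v}"

definition V2 :: "'a set \<Rightarrow> ('a \<Rightarrow> 'a \<Rightarrow> bool) \<Rightarrow> 'a list set \<Rightarrow> 'a set" where
  "V2 V E S = {v\<in>V. v \<notin> V1 E S \<and> (\<exists>u\<in>V1 E S. free_edge E S v u)}"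

definition V3 :: "'a set \<Rightarrow> ('a \<Rightarrow> 'a \<Rightarrow> bool) \<Rightarrow> 'a list set \<Rightarrow> 'a set" where
  "V3 V E S = {v\<in>V. v \<notin> V1 E S \<and> v \<notin> V2 V E S
      \<and> (\<forall>u. path_nbr E S v u \<longrightarrow> u \<in> V2 V E S)}"

definition V4 :: "'a set \<Rightarrow> ('a \<Rightarrow> 'a \<Rightarrow> bool) \<Rightarrow> 'a list set \<Rightarrow> 'a set" where
  "V4 V E S = {v\<in>V. v \<notin> V1 E S \<and> v \<notin> V2 V E S \<and> v \<notin> V3 V E S
      \<and> card {u. path_nbr E S v u \<and> u \<in> V2 V E S} = 1}"

definition V5 :: "'a set \<Rightarrow> ('a \<Rightarrow> 'a \<Rightarrow> bool) \<Rightarrow> 'a list set \<Rightarrow> 'a set" where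
  "V5 V E S = V - V1 E S - V2 V E S - V3 V E S - V4 V E S"

definition V2b :: "'a set \<Rightarrow> ('a \<Rightarrow> 'a \<Rightarrow> bool) \<Rightarrow> 'a list set \<Rightarrow> 'a set" where
  "V2b V E S = {v\<in>V2 V E S. \<exists>u. path_nbr E S v u \<and> u \<in> V2 V E S}"

definition balanced :: "'a set \<Rightarrow> ('a \<Rightarrow> 'a \<Rightarrow> bool) \<Rightarrow> 'a list set \<Rightarrow> 'a \<Rightarrow> 'a \<Rightarrow> bool" where
  "balanced V E S u v \<longleftrightarrow> free_edge E S u v \<and>
     ((u \<in> V1 E S \<and> v \<in> V2 V E S) \<or> (v \<in> V1 E S \<and> u \<in> V2 V E S))"

definition moderate :: "'a set \<Rightarrow> ('a \<Rightarrow> 'a \<Rightarrow> bool) \<Rightarrow> 'a list set \<Rightarrow> 'a \<Rightarrow> bool" where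
  "moderate V E S v \<longleftrightarrow> v \<in> V2 V E S \<and> card {u. balanced V E S v u} \<ge> 2
     \<and> (\<exists>u. balanced V E S v u \<and> end_vertex E S u)"

definition heavy :: "'a set \<Rightarrow> ('a \<Rightarrow> 'a \<Rightarrow> bool) \<Rightarrow> 'a list set \<Rightarrow> 'a \<Rightarrow> bool" where
  "heavy V E S v \<longleftrightarrow> v \<in> V2 V E S \<and> card {u. balanced V E S v u \<and> end_vertex E S u} \<ge> 3"

definition dangerous :: "'a set \<Rightarrow> ('a \<Rightarrow> 'a \<Rightarrow> bool) \<Rightarrow> 'a list set \<Rightarrow> 'a \<Rightarrow> bool" where
  "dangerous V E S v \<longleftrightarrow> v \<in> V3 V E S \<and> (\<exists>u w. u \<noteq> w \<and> path_nbr E S v u \<and> path_nbr E S v w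
      \<and> heavy V E S u \<and> moderate V E S w)"

definition bweight :: "('a \<Rightarrow> 'a \<Rightarrow> bool) \<Rightarrow> 'a list set \<Rightarrow> 'a \<Rightarrow> real" where
  "bweight E S y = (if end_vertex E S y then 2/3
     else (let C = (SOME p. p \<in> S \<and> cycle_comp E p \<and> y \<in> set p) in
           if length C \<le> 6 then 1 / real (length C) else 0))"

definition b :: "'a set \<Rightarrow> ('a \<Rightarrow> 'a \<Rightarrow> bool) \<Rightarrow> 'a list set \<Rightarrow> 'a set \<Rightarrow> real" where
  "b V E S Y = (\<Sum>(x, y) \<in> {(x, y). x \<in> Y \<and> y \<in> V1 E S \<and> balanced V E S x y}. bweight E S y)"

end

theory Submission
  imports Defs
begin

lemma is_path_succ: "is_path E p \<longleftrightarrow> p \<noteq> [] \<and> distinct p \<and> successively E p"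
  by (simp add: is_path_def successively_conv_nth)

lemma is_path_app:
  assumes "is_path E xs" "is_path E ys" "set xs \<inter> set ys = {}" "E (last xs) (hd ys)"
  shows "is_path E (xs @ ys)"
  using assms by (auto simp: is_path_succ successively_append_iff)

lemma is_path_appD1: "is_path E (xs @ ys) \<Longrightarrow> xs \<noteq> [] \<Longrightarrow> is_path E xs"
  by (auto simp: is_path_succ successively_append_iff)

lemma is_path_appD2: "is_path E (xs @ ys) \<Longrightarrow> ys \<noteq> [] \<Longrightarrow> is_path E ys"
  by (auto simp: is_path_succ successively_append_iff)

lemma is_path_appE: "is_path E (xs @ ys) \<Longrightarrow> xs \<noteq> [] \<Longrightarrow> ys \<noteq> [] \<Longrightarrow> E (last xs) (hd ys)"
  by (auto simp: is_path_succ successively_append_iff)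

lemma is_path_single[simp]: "is_path E [x]"
  by (simp add: is_path_succ)

lemma is_path_rev: "(\<And>u v. E u v \<Longrightarrow> E v u) \<Longrightarrow> is_path E p \<Longrightarrow> is_path E (rev p)"
  unfolding is_path_succ by (auto elim: successively_mono)

lemma path_spanning: "is_path E p \<Longrightarrow> length p \<ge> 3 \<Longrightarrow> E (last p) (hd p) \<Longrightarrow> spanning_cycle E (set p)"
  unfolding spanning_cycle_def is_path_def by blast

locale ctx =
  fixes V :: "'a set" and E :: "'a \<Rightarrow> 'a \<Rightarrow> bool" and S :: "'a list set"
  assumes G: "graph V E" and CA: "canonical V E S" and REG: "regular V E 6"
begin

lemma sym: "E u v \<Longrightarrow> E v u" using G by (auto simp: graph_def)
lemma irr: "\<not> E u u" using G by (auto simp: graph_def)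
lemma EV: "E u v \<Longrightarrow> v \<in> V" using G by (auto simp: graph_def)
lemma EV1: "E u v \<Longrightarrow> u \<in> V" using G by (auto simp: graph_def)
lemma finV: "finite V" using G by (auto simp: graph_def)
lemma PP: "path_partition V E S" using CA by (simp add: canonical_def)
lemma comp_path: "p \<in> S \<Longrightarrow> is_path E p" using PP by (simp add: path_partition_def)
lemma comp_V: "p \<in> S \<Longrightarrow> set p \<subseteq> V" using PP by (simp add: path_partition_def)
lemma disj: "p \<in> S \<Longrightarrow> q \<in> S \<Longrightarrow> p \<noteq> q \<Longrightarrow> set p \<inter> set q = {}"
  using PP by (simp add: path_partition_def)
lemma uniq: "p \<in> S \<Longrightarrow> q \<in> S \<Longrightarrow> v \<in> set p \<Longrightarrow> v \<in> set q \<Longrightarrow> p = q"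
  using disj by blast
lemma covers: "\<Union>(set ` S) = V" using PP by (simp add: path_partition_def)

lemma finS: "finite S"
proof -
  have inj: "inj_on set S"
  proof (rule inj_onI)
    fix p q assume "p \<in> S" "q \<in> S" "set p = set q"
    moreover have "p \<noteq> []" using comp_path[OF \<open>p \<in> S\<close>] by (simp add: is_path_def)
    ultimately show "p = q" using disj by fastforce
  qed
  have "set ` S \<subseteq> Pow V" using comp_V by auto
  hence "finite (set ` S)" using finV by (meson finite_Pow_iff finite_subset)
  thus ?thesis using inj finite_imageD by blast
qed

lemma exch:
  assumes R: "R \<subseteq> S" and fN: "finite N"
    and Np: "\<forall>n\<in>N. is_path E n"
    and Nd: "\<forall>n\<in>N. \<forall>m\<in>N. n \<noteq> m \<longrightarrow> set n \<inter> set m = {}"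
    and U: "\<Union>(set ` N) = \<Union>(set ` R)"
  shows "card R \<le> card N \<and> (card N = card R \<longrightarrow> card {n\<in>N. cycle_comp E n} \<le> card {r\<in>R. cycle_comp E r})"
proof -
  define S' where "S' = (S - R) \<union> N"
  have fR: "finite R" using R finS finite_subset by blast
  have NS: "N \<inter> (S - R) = {}"
  proof (rule ccontr)
    assume "N \<inter> (S - R) \<noteq> {}"
    then obtain n where n: "n \<in> N" "n \<in> S" "n \<notin> R" by auto
    have "n \<noteq> []" using Np n(1) by (simp add: is_path_def)
    hence "hd n \<in> set n" by simp
    then obtain r where r: "r \<in> R" "hd n \<in> set r" using U n(1) by blast
    have "n \<noteq> r" using r n by auto
    thus False using disj[of n r] n R r \<open>hd n \<in> set n\<close> by auto
  qed
  have pp: "path_partition V E S'"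
    unfolding path_partition_def
  proof (intro conjI ballI impI)
    fix p assume "p \<in> S'"
    thus "is_path E p" using Np comp_path by (auto simp: S'_def)
    show "set p \<subseteq> V"
    proof (cases "p \<in> N")
      case True
      hence "set p \<subseteq> \<Union>(set ` R)" using U by blast
      thus ?thesis using R comp_V by blast
    next
      case False thus ?thesis using \<open>p \<in> S'\<close> comp_V by (auto simp: S'_def)
    qed
  next
    fix p q assume pq: "p \<in> S'" "q \<in> S'" "p \<noteq> q"
    have cross: "set p \<inter> set q = {}" if "p \<in> S - R" "q \<in> N" for p q
    proof -
      have "set q \<subseteq> \<Union>(set ` R)" using U that(2) by blast
      moreover have "\<forall>r\<in>R. set p \<inter> set r = {}" using that(1) R disj by blast
      ultimately show ?thesis by blast
    qed
    show "set p \<inter> set q = {}"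
    proof (cases "p \<in> N \<and> q \<in> N")
      case True thus ?thesis using Nd pq(3) by blast
    next
      case False
      thus ?thesis using pq cross[of p q] cross[of q p] disj by (auto simp: S'_def)
    qed
  next
    have "\<Union>(set ` S') = \<Union>(set ` (S - R)) \<union> \<Union>(set ` R)" using U by (auto simp: S'_def)
    also have "\<dots> = \<Union>(set ` S)" using R by blast
    finally show "\<Union>(set ` S') = V" using covers by simp
  qed
  have cS': "card S' = card S - card R + card N"
  proof -
    have "card S' = card (S - R) + card N" unfolding S'_def
      using NS fN finS by (subst card_Un_disjoint) auto
    moreover have "card (S - R) = card S - card R" using R fR by (simp add: card_Diff_subset)
    ultimately show ?thesis by simp
  qed
  have RS: "card R \<le> card S" using R finS card_mono by blast
  have 1: "card S \<le> card S'" using CA pp by (simp add: canonical_def)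
  hence c1: "card R \<le> card N" using cS' RS by linarith
  moreover
  { assume eq: "card N = card R"
    hence "card S' = card S" using cS' RS by simp
    hence le: "num_cycles E S' \<le> num_cycles E S" using CA pp by (simp add: canonical_def)
    have a: "num_cycles E S' = card {p\<in>S - R. cycle_comp E p} + card {n\<in>N. cycle_comp E n}"
    proof -
      have "{p \<in> S'. cycle_comp E p} = {p\<in>S - R. cycle_comp E p} \<union> {n\<in>N. cycle_comp E n}"
        by (auto simp: S'_def)
      thus ?thesis unfolding num_cycles_def using NS fN finS by (auto intro: card_Un_disjoint)
    qed
    have b: "num_cycles E S = card {p\<in>S - R. cycle_comp E p} + card {r\<in>R. cycle_comp E r}"
    proof -
      have "{p \<in> S. cycle_comp E p} = {p\<in>S - R. cycle_comp E p} \<union> {r\<in>R. cycle_comp E r}"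
        using R by auto
      thus ?thesis unfolding num_cycles_def using fR finS by (auto intro: card_Un_disjoint)
    qed
    have "card {n\<in>N. cycle_comp E n} \<le> card {r\<in>R. cycle_comp E r}" using le a b by linarith }
  ultimately show ?thesis by blast
qed

end

context ctx
begin

definition ham2 :: "'a list \<Rightarrow> 'a \<Rightarrow> 'a \<Rightarrow> bool" where
  "ham2 K y z \<longleftrightarrow> (\<exists>L. is_path E L \<and> set L = set K \<and> hd L = y \<and> last L = z)"

lemma ham2_sym: "ham2 K y z \<Longrightarrow> ham2 K z y"
  unfolding ham2_def
  by (metis hd_rev is_path_rev last_rev set_rev sym)

lemma ham2_path: "Q \<in> S \<Longrightarrow> ham2 Q (hd Q) (last Q)"
  unfolding ham2_def using comp_path by blast

lemma Pparts:
  assumes "P \<in> S" "P = A @ [x, x'] @ B"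
  shows "is_path E (A @ [x])" "is_path E (x' # B)" "E x x'" "distinct P"
    "A \<noteq> [] \<Longrightarrow> E (last A) x" "B \<noteq> [] \<Longrightarrow> E x' (hd B)"
    "A \<noteq> [] \<Longrightarrow> is_path E A" "B \<noteq> [] \<Longrightarrow> is_path E B"
proof -
  have p: "is_path E P" using comp_path assms(1) by blast
  show "is_path E (A @ [x])" using is_path_appD1[of E "A @ [x]" "x' # B"] p assms(2) by simp
  show "is_path E (x' # B)" using is_path_appD2[of E "A @ [x]" "x' # B"] p assms(2) by simp
  show "E x x'" using is_path_appE[of E "A @ [x]" "x' # B"] p assms(2) by simp
  show "distinct P" using p by (simp add: is_path_def)
  show "A \<noteq> [] \<Longrightarrow> E (last A) x" using is_path_appE[of E "A" "x # x' # B"] p assms(2) by simp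
  show "B \<noteq> [] \<Longrightarrow> E x' (hd B)" using is_path_appE[of E "A @ [x, x']" "B"] p assms(2) by simp
  show "A \<noteq> [] \<Longrightarrow> is_path E A" using is_path_appD1[of E "A" "x # x' # B"] p assms(2) by simp
  show "B \<noteq> [] \<Longrightarrow> is_path E B" using is_path_appD2[of E "A @ [x, x']" "B"] p assms(2) by simp
qed

lemma E1:
  assumes P: "P \<in> S" "P = A @ [x, x'] @ B"
    and K: "K1 \<in> S" "K2 \<in> S" "K1 \<noteq> P" "K2 \<noteq> P" "K1 \<noteq> K2"
    and h1: "ham2 K1 y y1" and h2: "ham2 K2 z2 z" and e: "E x y" "E x' z"
  shows False
proof -
  obtain L1 where L1: "is_path E L1" "set L1 = set K1" "hd L1 = y" using h1 ham2_def by blast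
  obtain L2 where L2: "is_path E L2" "set L2 = set K2" "last L2 = z" using h2 ham2_def by blast
  note pp = Pparts[OF P]
  have d1: "set P \<inter> set K1 = {}" "set P \<inter> set K2 = {}" "set K1 \<inter> set K2 = {}"
    using disj K P(1) by auto
  define n1 where "n1 = (A @ [x]) @ L1"
  define n2 where "n2 = L2 @ (x' # B)"
  have n1: "is_path E n1" unfolding n1_def
    using is_path_app[OF pp(1) L1(1)] d1 L1 e P(2) by auto
  have n2: "is_path E n2" unfolding n2_def
  proof (rule is_path_app[OF L2(1) pp(2)])
    show "set L2 \<inter> set (x' # B) = {}" using d1 L2 P(2) by auto
    show "E (last L2) (hd (x' # B))" using L2 e sym by simp
  qed
  have dd: "set n1 \<inter> set n2 = {}" unfolding n1_def n2_def
    using d1 L1 L2 pp(4) P(2) by auto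
  have ne: "n1 \<noteq> n2" using dd n1 by (auto simp: is_path_def)
  have "card {P, K1, K2} \<le> card {n1, n2}"
    using exch[of "{P, K1, K2}" "{n1, n2}"] n1 n2 dd K P(1) L1 L2
    by (auto simp: n1_def n2_def P(2))
  moreover have "card {P, K1, K2} = 3" using K by auto
  moreover have "card {n1, n2} \<le> 2" by (simp add: card_insert_le_m1)
  ultimately show False by simp
qed

lemma E2:
  assumes P: "P \<in> S" "P = A @ [x, x'] @ B"
    and K: "K \<in> S" "K \<noteq> P" and h: "ham2 K y z" and e: "E x y" "E x' z"
  shows False
proof -
  obtain L where L: "is_path E L" "set L = set K" "hd L = y" "last L = z" using h ham2_def by blast
  note pp = Pparts[OF P]
  have d1: "set P \<inter> set K = {}" using disj K P(1) by auto
  define n1 where "n1 = ((A @ [x]) @ L) @ (x' # B)"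
  have a: "is_path E ((A @ [x]) @ L)" using is_path_app[OF pp(1) L(1)] d1 L e P(2) by auto
  have n1: "is_path E n1" unfolding n1_def
  proof (rule is_path_app[OF a pp(2)])
    show "set ((A @ [x]) @ L) \<inter> set (x' # B) = {}" using d1 L P(2) pp(4) by auto
    have "L \<noteq> []" using L(1) by (simp add: is_path_def)
    thus "E (last ((A @ [x]) @ L)) (hd (x' # B))" using L e sym by simp
  qed
  have "card {P, K} \<le> card {n1}"
    using exch[of "{P, K}" "{n1}"] n1 K P(1) L by (auto simp: n1_def P(2))
  moreover have "card {P, K} = 2" using K by auto
  ultimately show False by simp
qed

lemma Lc_path:
  assumes P: "P \<in> S" "P = A @ [x, x'] @ B" and ne: "B \<noteq> []" and e: "E x (last B)"
  shows "is_path E (((A @ [x]) @ rev B) @ [x'])" "set (((A @ [x]) @ rev B) @ [x']) = set P"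
proof -
  note pp = Pparts[OF P]
  have a: "is_path E ((A @ [x]) @ rev B)"
  proof (rule is_path_app[OF pp(1)])
    show "is_path E (rev B)" using is_path_rev[OF _ pp(8)[OF ne]] sym by blast
    show "set (A @ [x]) \<inter> set (rev B) = {}" using pp(4) P(2) by auto
    show "E (last (A @ [x])) (hd (rev B))" using e ne by (simp add: hd_rev)
  qed
  show "is_path E (((A @ [x]) @ rev B) @ [x'])"
  proof (rule is_path_app[OF a])
    show "set ((A @ [x]) @ rev B) \<inter> set [x'] = {}" using pp(4) P(2) by auto
    show "E (last ((A @ [x]) @ rev B)) (hd [x'])" using pp(6)[OF ne] ne sym by (simp add: last_rev)
  qed auto
  show "set (((A @ [x]) @ rev B) @ [x']) = set P" using P(2) by auto
qed

lemma E3span: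
  assumes P: "P \<in> S" "P = A @ [x, x'] @ B" and ne: "A \<noteq> []" "B \<noteq> []"
    and e: "E x (last B)" "E x' (hd A)"
  shows "cycle_comp E P"
proof -
  note L = Lc_path[OF P ne(2) e(1)]
  have "spanning_cycle E (set (((A @ [x]) @ rev B) @ [x']))"
    using path_spanning[OF L(1)] ne e(2) by (cases A; cases B; simp)
  thus ?thesis using L(2) P(2) ne unfolding cycle_comp_def by (cases A; cases B; simp)
qed

lemma E3merge:
  assumes P: "P \<in> S" "P = A @ [x, x'] @ B" and ne: "B \<noteq> []"
    and e: "E x (last B)" and K: "K \<in> S" "K \<noteq> P" and h: "ham2 K z z'" and e2: "E x' z"
  shows False
proof -
  obtain L where L: "is_path E L" "set L = set K" "hd L = z" using h ham2_def by blast
  note Lc = Lc_path[OF P ne e]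
  have d1: "set P \<inter> set K = {}" using disj K P(1) by auto
  define n1 where "n1 = (((A @ [x]) @ rev B) @ [x']) @ L"
  have n1: "is_path E n1" unfolding n1_def
    using is_path_app[OF Lc(1) L(1)] Lc(2) d1 L e2 by auto
  have "card {P, K} \<le> card {n1}"
    using exch[of "{P, K}" "{n1}"] n1 K P(1) L Lc(2) unfolding n1_def by auto
  moreover have "card {P, K} = 2" using K by auto
  ultimately show False by simp
qed

lemma E3'merge:
  assumes P: "P \<in> S" "P = A @ [x, x'] @ B" and ne: "A \<noteq> []" "B \<noteq> []"
    and e: "E x' (hd A)" and K: "K \<in> S" "K \<noteq> P" and h: "ham2 K y y'" and e2: "E x y"
  shows False
proof -
  obtain L where L: "is_path E L" "set L = set K" "hd L = y" using h ham2_def by blast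
  note pp = Pparts[OF P]
  have d1: "set P \<inter> set K = {}" using disj K P(1) by auto
  have m1: "is_path E (rev B @ [x'])"
  proof (rule is_path_app)
    show "is_path E (rev B)" using is_path_rev[OF _ pp(8)[OF ne(2)]] sym by blast
    show "set (rev B) \<inter> set [x'] = {}" using pp(4) P(2) by auto
    show "E (last (rev B)) (hd [x'])" using pp(6)[OF ne(2)] ne sym by (simp add: last_rev)
  qed auto
  have m2: "is_path E ((rev B @ [x']) @ (A @ [x]))"
  proof (rule is_path_app[OF m1 pp(1)])
    show "set (rev B @ [x']) \<inter> set (A @ [x]) = {}" using pp(4) P(2) by auto
    show "E (last (rev B @ [x'])) (hd (A @ [x]))" using e ne by simp
  qed
  define n1 where "n1 = ((rev B @ [x']) @ (A @ [x])) @ L"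
  have n1: "is_path E n1" unfolding n1_def
    using is_path_app[OF m2 L(1)] P(2) d1 L e2 by auto
  have "card {P, K} \<le> card {n1}"
    using exch[of "{P, K}" "{n1}"] n1 K P(1) L unfolding n1_def by (auto simp: P(2))
  moreover have "card {P, K} = 2" using K by auto
  ultimately show False by simp
qed

lemma pc_not_cc: "path_comp E p \<Longrightarrow> \<not> cycle_comp E p"
  by (simp add: path_comp_def)

lemma E4:
  assumes P: "P \<in> S" "P = A @ [x, x'] @ B" and Pc: "path_comp E P" and lA: "length A \<ge> 2"
    and e: "E x (hd A)" and K: "K2 \<in> S" "K2 \<noteq> P" "path_comp E K2"
    and h: "ham2 K2 z2 z" and e2: "E x' z"
  shows False
proof -
  obtain L2 where L2: "is_path E L2" "set L2 = set K2" "last L2 = z" using h ham2_def by blast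
  note pp = Pparts[OF P]
  have d1: "set P \<inter> set K2 = {}" using disj K P(1) by auto
  define n1 where "n1 = A @ [x]"
  define n2 where "n2 = L2 @ (x' # B)"
  have n2: "is_path E n2" unfolding n2_def
  proof (rule is_path_app[OF L2(1) pp(2)])
    show "set L2 \<inter> set (x' # B) = {}" using d1 L2 P(2) by auto
    show "E (last L2) (hd (x' # B))" using L2 e2 sym by simp
  qed
  have c1: "cycle_comp E n1" unfolding cycle_comp_def n1_def
    using path_spanning[OF pp(1)] lA e by (cases A) auto
  have dd: "set n1 \<inter> set n2 = {}" unfolding n1_def n2_def using d1 L2 pp(4) P(2) by auto
  have ne: "n1 \<noteq> n2" using dd n2 by (auto simp: is_path_def)
  have ex: "card {P, K2} \<le> card {n1, n2} \<and> (card {n1, n2} = card {P, K2} \<longrightarrow>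
     card {n\<in>{n1,n2}. cycle_comp E n} \<le> card {r\<in>{P,K2}. cycle_comp E r})"
    using exch[of "{P, K2}" "{n1, n2}"] n2 pp(1) dd K P(1) L2
    by (auto simp: n1_def n2_def P(2))
  have c2: "card {P, K2} = 2" "card {n1, n2} = 2" using K ne by auto
  have "{r\<in>{P,K2}. cycle_comp E r} = {}" using Pc K pc_not_cc by auto
  hence c0: "card {r\<in>{P,K2}. cycle_comp E r} = 0" by (simp only: card.empty)
  have "n1 \<in> {n\<in>{n1,n2}. cycle_comp E n}" using c1 by simp
  hence "{n\<in>{n1,n2}. cycle_comp E n} \<noteq> {}" by blast
  hence "card {n\<in>{n1,n2}. cycle_comp E n} > 0" by (simp add: card_gt_0_iff)
  hence "card {n\<in>{n1,n2}. cycle_comp E n} \<ge> 1" by simp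
  thus False using ex c0 c2 by linarith
qed

lemma E4':
  assumes P: "P \<in> S" "P = A @ [x, x'] @ B" and Pc: "path_comp E P" and lB: "length B \<ge> 2"
    and e: "E x' (last B)" and K: "K1 \<in> S" "K1 \<noteq> P" "path_comp E K1"
    and h: "ham2 K1 y y1" and e2: "E x y"
  shows False
proof -
  obtain L1 where L1: "is_path E L1" "set L1 = set K1" "hd L1 = y" using h ham2_def by blast
  note pp = Pparts[OF P]
  have d1: "set P \<inter> set K1 = {}" using disj K P(1) by auto
  define n1 where "n1 = (A @ [x]) @ L1"
  define n2 where "n2 = x' # B"
  have n1: "is_path E n1" unfolding n1_def
    using is_path_app[OF pp(1) L1(1)] d1 L1 e2 P(2) by auto
  have cc2: "cycle_comp E n2" unfolding cycle_comp_def n2_def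
    using path_spanning[OF pp(2)] lB e sym by (cases B) auto
  have dd: "set n1 \<inter> set n2 = {}" unfolding n1_def n2_def using d1 L1 pp(4) P(2) by auto
  have ne: "n1 \<noteq> n2" using dd n1 by (auto simp: is_path_def)
  have ex: "card {P, K1} \<le> card {n1, n2} \<and> (card {n1, n2} = card {P, K1} \<longrightarrow>
     card {n\<in>{n1,n2}. cycle_comp E n} \<le> card {r\<in>{P,K1}. cycle_comp E r})"
    using exch[of "{P, K1}" "{n1, n2}"] n1 pp(2) dd K P(1) L1
    by (auto simp: n1_def n2_def P(2))
  have c2: "card {P, K1} = 2" "card {n1, n2} = 2" using K ne by auto
  have "{r\<in>{P,K1}. cycle_comp E r} = {}" using Pc K pc_not_cc by auto
  hence c0: "card {r\<in>{P,K1}. cycle_comp E r} = 0" by (simp only: card.empty)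
  have "n2 \<in> {n\<in>{n1,n2}. cycle_comp E n}" using cc2 by simp
  hence "{n\<in>{n1,n2}. cycle_comp E n} \<noteq> {}" by blast
  hence "card {n\<in>{n1,n2}. cycle_comp E n} > 0" by (simp add: card_gt_0_iff)
  hence "card {n\<in>{n1,n2}. cycle_comp E n} \<ge> 1" by simp
  thus False using ex c0 c2 by linarith
qed

end

definition cycprop :: "('a \<Rightarrow> 'a \<Rightarrow> bool) \<Rightarrow> 'a list \<Rightarrow> bool" where
  "cycprop E c \<longleftrightarrow> distinct c \<and> length c \<ge> 3
      \<and> (\<forall>i. Suc i < length c \<longrightarrow> E (c!i) (c!Suc i)) \<and> E (last c) (hd c)"

lemma cyc_step:
  assumes "cycprop E c" "i < length c"
  shows "E (c!i) (c!(Suc i mod length c))"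
proof (cases "Suc i < length c")
  case True thus ?thesis using assms by (simp add: cycprop_def)
next
  case False
  hence i: "i = length c - 1" "Suc i = length c" using assms(2) by auto
  have ne: "c \<noteq> []" using assms(2) by auto
  have "c ! i = last c" using i ne by (simp add: last_conv_nth)
  moreover have "c ! (Suc i mod length c) = hd c" using i ne by (simp add: hd_conv_nth)
  ultimately show ?thesis using assms(1) by (simp add: cycprop_def)
qed

lemma rot_path:
  assumes "cycprop E c"
  shows "is_path E (rotate m c)"
proof -
  have L: "length c \<ge> 3" "distinct c" using assms by (auto simp: cycprop_def)
  show ?thesis unfolding is_path_def
  proof (intro conjI allI impI)
    show "rotate m c \<noteq> []" using L by (cases c) auto
    show "distinct (rotate m c)" using L by simp
    fix t assume t: "Suc t < length (rotate m c)"
    have e1: "rotate m c ! t = c ! ((m + t) mod length c)" using t by (simp add: nth_rotate)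
    have e2: "rotate m c ! Suc t = c ! (Suc ((m + t) mod length c) mod length c)"
      using t by (simp add: nth_rotate mod_Suc_eq)
    have "(m + t) mod length c < length c" using L by (intro mod_less_divisor) auto
    thus "E (rotate m c ! t) (rotate m c ! Suc t)" using cyc_step[OF assms] e1 e2 by simp
  qed
qed

lemma rot_hd_last:
  assumes "cycprop E c"
  shows "hd (rotate m c) = c ! (m mod length c)"
    "last (rotate m c) = c ! ((m + (length c - 1)) mod length c)"
proof -
  have L: "length c \<ge> 3" using assms by (auto simp: cycprop_def)
  hence ne: "c \<noteq> []" by auto
  show "hd (rotate m c) = c ! (m mod length c)" using ne by (simp add: hd_rotate_conv_nth)
  have "rotate m c \<noteq> []" using ne by (cases c) auto
  hence "last (rotate m c) = rotate m c ! (length c - 1)" by (simp add: last_conv_nth)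
  also have "\<dots> = c ! ((m + (length c - 1)) mod length c)" using L by (subst nth_rotate) auto
  finally show "last (rotate m c) = c ! ((m + (length c - 1)) mod length c)" .
qed

context ctx
begin

definition cyc_of :: "'a list \<Rightarrow> 'a list" where
  "cyc_of C = (SOME c. distinct c \<and> set c = set C \<and> length c \<ge> 3
      \<and> (\<forall>i. Suc i < length c \<longrightarrow> E (c!i) (c!Suc i)) \<and> E (last c) (hd c))"

lemma cyc_of:
  assumes "cycle_comp E C"
  shows "cycprop E (cyc_of C)" "set (cyc_of C) = set C"
proof -
  have "\<exists>c. distinct c \<and> set c = set C \<and> length c \<ge> 3
      \<and> (\<forall>i. Suc i < length c \<longrightarrow> E (c!i) (c!Suc i)) \<and> E (last c) (hd c)"
    using assms by (auto simp: cycle_comp_def spanning_cycle_def)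
  from someI_ex[OF this] show "cycprop E (cyc_of C)" "set (cyc_of C) = set C"
    unfolding cyc_of_def cycprop_def by blast+
qed

lemma ham2_rot:
  assumes "cycle_comp E C"
  shows "ham2 C (cyc_of C ! (m mod length (cyc_of C)))
     (cyc_of C ! ((m + (length (cyc_of C) - 1)) mod length (cyc_of C)))"
  unfolding ham2_def
proof (intro exI conjI)
  show "is_path E (rotate m (cyc_of C))" using rot_path[OF cyc_of(1)[OF assms]] .
  show "set (rotate m (cyc_of C)) = set C" using cyc_of(2)[OF assms] by simp
qed (use rot_hd_last[OF cyc_of(1)[OF assms]] in auto)

definition adjc :: "'a list \<Rightarrow> 'a \<Rightarrow> 'a set" where
  "adjc C z = {u. \<exists>j<length (cyc_of C). cyc_of C ! j = z \<and>
     (u = cyc_of C ! (Suc j mod length (cyc_of C)) \<or>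
      u = cyc_of C ! ((j + (length (cyc_of C) - 1)) mod length (cyc_of C)))}"

lemma ham_cyc:
  assumes "cycle_comp E C" "y \<in> set C"
  shows "\<exists>y'. ham2 C y y'"
proof -
  let ?c = "cyc_of C"
  obtain j where j: "j < length ?c" "?c ! j = y" using assms cyc_of(2)[OF assms(1)]
    by (metis in_set_conv_nth)
  show ?thesis using ham2_rot[OF assms(1), of j] j by auto
qed

lemma adj_ham:
  assumes "cycle_comp E C" "u \<in> adjc C z"
  shows "ham2 C u z"
proof -
  let ?c = "cyc_of C" let ?L = "length (cyc_of C)"
  have L3: "?L \<ge> 3" using cyc_of(1)[OF assms(1)] by (simp add: cycprop_def)
  obtain j where j: "j < ?L" "?c ! j = z"
    "u = ?c ! (Suc j mod ?L) \<or> u = ?c ! ((j + (?L - 1)) mod ?L)"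
    using assms(2) unfolding adjc_def by blast
  show ?thesis
  proof (cases "u = ?c ! (Suc j mod ?L)")
    case True
    have "Suc j + (?L - 1) = j + ?L" using L3 by simp
    hence "(Suc j + (?L - 1)) mod ?L = j" using j(1) by simp
    thus ?thesis using ham2_rot[OF assms(1), of "Suc j"] True j by simp
  next
    case False
    hence u: "u = ?c ! ((j + (?L - 1)) mod ?L)" using j(3) by blast
    show ?thesis using ham2_rot[OF assms(1), of j] j u by (simp add: ham2_sym)
  qed
qed

lemma adjc_card:
  assumes "cycle_comp E C" "z \<in> set C"
  shows "adjc C z \<subseteq> set C" "card (adjc C z) = 2"
proof -
  let ?c = "cyc_of C" let ?L = "length (cyc_of C)"
  have cp: "cycprop E ?c" using cyc_of(1)[OF assms(1)] .
  have L3: "?L \<ge> 3" and dc: "distinct ?c" using cp by (auto simp: cycprop_def)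
  obtain j0 where j0: "j0 < ?L" "?c ! j0 = z" using assms cyc_of(2)[OF assms(1)]
    by (metis in_set_conv_nth)
  have eq: "adjc C z = {?c ! (Suc j0 mod ?L), ?c ! ((j0 + (?L - 1)) mod ?L)}"
  proof -
    have un: "\<And>j. j < ?L \<Longrightarrow> ?c ! j = z \<Longrightarrow> j = j0" using j0 dc nth_eq_iff_index_eq by metis
    show ?thesis
    proof (rule set_eqI, rule iffI)
      fix u assume "u \<in> adjc C z"
      then obtain j where j: "j < ?L" "?c ! j = z"
        "u = ?c ! (Suc j mod ?L) \<or> u = ?c ! ((j + (?L - 1)) mod ?L)" unfolding adjc_def by blast
      have "j = j0" using un j by blast
      thus "u \<in> {?c ! (Suc j0 mod ?L), ?c ! ((j0 + (?L - 1)) mod ?L)}" using j(3) by blast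
    next
      fix u assume "u \<in> {?c ! (Suc j0 mod ?L), ?c ! ((j0 + (?L - 1)) mod ?L)}"
      thus "u \<in> adjc C z" unfolding adjc_def using j0 by blast
    qed
  qed
  have bnd: "Suc j0 mod ?L < ?L" "(j0 + (?L - 1)) mod ?L < ?L" 
  proof -
    have L0: "0 < ?L" using L3 by linarith
    show "Suc j0 mod ?L < ?L" using L0 by (rule mod_less_divisor)
    show "(j0 + (?L - 1)) mod ?L < ?L" using L0 by (rule mod_less_divisor)
  qed
  thus "adjc C z \<subseteq> set C" unfolding eq using cyc_of(2)[OF assms(1)]
    by (metis empty_subsetI insert_subset nth_mem)
  have i1: "Suc j0 mod ?L = (if Suc j0 = ?L then 0 else Suc j0)" using j0(1) by auto
  have i2: "(j0 + (?L - 1)) mod ?L = (if j0 = 0 then ?L - 1 else j0 - 1)"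
  proof (cases "j0 = 0")
    case True thus ?thesis using L3 by simp
  next
    case False
    have "j0 + (?L - 1) = (j0 - 1) + ?L" using False L3 by simp
    hence "(j0 + (?L - 1)) mod ?L = (j0 - 1) mod ?L" by simp
    thus ?thesis using False j0(1) by simp
  qed
  have ne: "Suc j0 mod ?L \<noteq> (j0 + (?L - 1)) mod ?L" unfolding i1 i2 using L3 j0(1) by auto
  have "?c ! (Suc j0 mod ?L) \<noteq> ?c ! ((j0 + (?L - 1)) mod ?L)"
    using ne dc bnd nth_eq_iff_index_eq by metis
  thus "card (adjc C z) = 2" unfolding eq by simp
qed

end

lemma pn_intro:
  assumes "Q \<in> S" "path_comp E Q" "Q = A @ [u, v] @ B"
  shows "path_nbr E S u v" "path_nbr E S v u"
proof -
  have h: "Suc (length A) < length Q" "Q ! length A = u" "Q ! Suc (length A) = v"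
    using assms(3) by (auto simp: nth_append)
  have "\<exists>i. Suc i < length Q \<and> ((Q!i = u \<and> Q!Suc i = v) \<or> (Q!i = v \<and> Q!Suc i = u))"
    by (rule exI[of _ "length A"]) (use h in simp)
  thus "path_nbr E S u v" unfolding path_nbr_def using assms(1,2) by (intro bexI[OF _ assms(1)]) simp
  have "\<exists>i. Suc i < length Q \<and> ((Q!i = v \<and> Q!Suc i = u) \<or> (Q!i = u \<and> Q!Suc i = v))"
    by (rule exI[of _ "length A"]) (use h in simp)
  thus "path_nbr E S v u" unfolding path_nbr_def using assms(1,2) by (intro bexI[OF _ assms(1)]) simp
qed

locale pctx = ctx +
  fixes P assumes PS: "P \<in> S" and Pc: "path_comp E P"
begin

definition Nb :: "'a \<Rightarrow> 'a set" where
  "Nb x = {y. y \<in> V1 E S \<and> free_edge E S x y}"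

definition Oe :: "'a \<Rightarrow> bool" where
  "Oe y \<longleftrightarrow> (\<exists>Q\<in>S. Q \<noteq> P \<and> path_comp E Q \<and> (y = hd Q \<or> y = last Q))"

definition Cy :: "'a \<Rightarrow> bool" where
  "Cy y \<longleftrightarrow> (\<exists>C\<in>S. cycle_comp E C \<and> y \<in> set C)"

lemma V1_cases: assumes "y \<in> V1 E S" shows "y = hd P \<or> y = last P \<or> Oe y \<or> Cy y"
proof -
  have "end_vertex E S y \<or> in_cycle E S y" using assms by (simp add: V1_def)
  thus ?thesis
  proof
    assume "end_vertex E S y"
    then obtain p where p: "p \<in> S" "path_comp E p" "y = hd p \<or> y = last p"
      unfolding end_vertex_def by blast
    show ?thesis
    proof (cases "p = P")
      case True thus ?thesis using p by blast
    next
      case False hence "Oe y" unfolding Oe_def using p by blast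
      thus ?thesis by blast
    qed
  next
    assume "in_cycle E S y" thus ?thesis by (simp add: Cy_def in_cycle_def)
  qed
qed

lemma NbE: "y \<in> Nb x \<Longrightarrow> E x y \<and> \<not> path_nbr E S x y \<and> y \<in> V1 E S"
  unfolding Nb_def free_edge_def by blast

lemma Oe_ham: assumes "Oe y"
  obtains Q y' where "Q \<in> S" "Q \<noteq> P" "path_comp E Q" "ham2 Q y y'" "ham2 Q y' y"
    "\<And>z. z \<noteq> y \<Longrightarrow> (z = hd Q \<or> z = last Q) \<Longrightarrow> ham2 Q y z" "y = hd Q \<or> y = last Q"
proof -
  obtain Q where Q: "Q \<in> S" "Q \<noteq> P" "path_comp E Q" "y = hd Q \<or> y = last Q"
    using assms Oe_def by blast
  have h: "ham2 Q (hd Q) (last Q)" "ham2 Q (last Q) (hd Q)" using ham2_path[OF Q(1)] ham2_sym by auto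
  show ?thesis
  proof (cases "y = hd Q")
    case True thus ?thesis using that[OF Q(1-3), of "last Q"] h Q(4) by auto
  next
    case False thus ?thesis using that[OF Q(1-3), of "hd Q"] h Q(4) by auto
  qed
qed

lemma Cy_ham: assumes "Cy y"
  obtains C y' where "C \<in> S" "C \<noteq> P" "cycle_comp E C" "y \<in> set C" "ham2 C y y'" "ham2 C y' y"
proof -
  obtain C where C: "C \<in> S" "cycle_comp E C" "y \<in> set C" using assms Cy_def by blast
  obtain y' where "ham2 C y y'" using ham_cyc C by blast
  moreover have "C \<noteq> P" using C(2) Pc pc_not_cc by blast
  ultimately show ?thesis using that C ham2_sym by blast
qed

lemma Oe_P: "Oe y \<Longrightarrow> y \<notin> set P"
  unfolding Oe_def using disj PS
  by (metis comp_path disjoint_iff hd_in_set is_path_def last_in_set)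

lemma Cy_P: "Cy y \<Longrightarrow> y \<notin> set P"
  unfolding Cy_def using disj PS Pc pc_not_cc by blast

lemma A2: assumes "P = A @ [x, x'] @ B" "A \<noteq> []" "hd P \<in> Nb x" shows "length A \<ge> 2"
proof (rule ccontr)
  assume "\<not> length A \<ge> 2"
  then obtain u where u: "A = [u]" using assms(2)
  proof (cases A)
    case (Cons u T) thus ?thesis using that \<open>\<not> length A \<ge> 2\<close> by (cases T) auto
  qed simp
  hence "P = [] @ [u, x] @ (x' # B)" using assms(1) by simp
  hence "path_nbr E S x u" using pn_intro(2)[OF PS Pc] by blast
  moreover have "hd P = u" using u assms(1) by simp
  ultimately show False using NbE[OF assms(3)] by simp
qed

lemma B2: assumes "P = A @ [x, x'] @ B" "B \<noteq> []" "last P \<in> Nb x'" shows "length B \<ge> 2"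
proof (rule ccontr)
  assume "\<not> length B \<ge> 2"
  then obtain u where u: "B = [u]" using assms(2)
  proof (cases B)
    case (Cons u T) thus ?thesis using that \<open>\<not> length B \<ge> 2\<close> by (cases T) auto
  qed simp
  hence "P = (A @ [x]) @ [x', u] @ []" using assms(1) by simp
  hence "path_nbr E S x' u" using pn_intro(1)[OF PS Pc] by blast
  moreover have "last P = u" using u assms(1) by simp
  ultimately show False using NbE[OF assms(3)] by simp
qed

lemma PO1:
  assumes cs: "P = A @ [x, x'] @ B" "A \<noteq> []" "B \<noteq> []"
    and y: "y \<in> Nb x" "Oe y" and z: "z \<in> Nb x'"
  shows "z = y"
proof (rule ccontr)
  assume zy: "z \<noteq> y"
  obtain Q y1 where Q: "Q \<in> S" "Q \<noteq> P" "path_comp E Q" "ham2 Q y y1" "ham2 Q y1 y"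
    "\<And>z. z \<noteq> y \<Longrightarrow> (z = hd Q \<or> z = last Q) \<Longrightarrow> ham2 Q y z"
    using Oe_ham[OF y(2)] by blast
  have ey: "E x y" and ez: "E x' z" using NbE y z by auto
  have hA: "hd P = hd A" and lB: "last P = last B" using cs by auto
  consider "z = hd P" | "z = last P" | "Oe z" | "Cy z" using V1_cases NbE[OF z] by blast
  thus False
  proof cases
    case 1 thus False using E3'merge[OF PS cs(1) cs(2) cs(3) _ Q(1) Q(2) Q(4) ey] ez hA by simp
  next
    case 2
    have "length B \<ge> 2" using B2[OF cs(1) cs(3)] z 2 by simp
    thus False using E4'[OF PS cs(1) Pc _ _ Q(1) Q(2) Q(3) Q(4) ey] ez 2 lB by simp
  next
    case 3
    then obtain R z1 where R: "R \<in> S" "R \<noteq> P" "path_comp E R" "ham2 R z z1" "ham2 R z1 z"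
      "z = hd R \<or> z = last R"
      using Oe_ham by metis
    show False
    proof (cases "R = Q")
      case True
      have "z = hd Q \<or> z = last Q" using True R(6) by simp
      thus False using E2[OF PS cs(1) Q(1) Q(2) Q(6)[OF zy] ey ez] by blast
    next
      case False
      thus False using E1[OF PS cs(1) Q(1) R(1) Q(2) R(2) _ Q(4) R(5) ey ez] by auto
    qed
  next
    case 4
    then obtain D z1 where D: "D \<in> S" "D \<noteq> P" "cycle_comp E D" "z \<in> set D" "ham2 D z1 z"
      using Cy_ham by blast
    have "D \<noteq> Q" using D(3) Q(3) pc_not_cc by blast
    thus False using E1[OF PS cs(1) Q(1) D(1) Q(2) D(2) _ Q(4) D(5) ey ez] by auto
  qed
qed

lemma PO2:
  assumes cs: "P = A @ [x, x'] @ B" "A \<noteq> []" "B \<noteq> []"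
    and z: "z \<in> Nb x'" "Oe z" and y: "y \<in> Nb x"
  shows "y = z"
proof (rule ccontr)
  assume yz: "y \<noteq> z"
  obtain R z1 where R: "R \<in> S" "R \<noteq> P" "path_comp E R" "ham2 R z z1" "ham2 R z1 z"
    "\<And>u. u \<noteq> z \<Longrightarrow> (u = hd R \<or> u = last R) \<Longrightarrow> ham2 R z u"
    using Oe_ham[OF z(2)] by blast
  have ey: "E x y" and ez: "E x' z" using NbE y z by auto
  have hA: "hd P = hd A" and lB: "last P = last B" using cs by auto
  consider "y = hd P" | "y = last P" | "Oe y" | "Cy y" using V1_cases NbE[OF y] by blast
  thus False
  proof cases
    case 1
    have "length A \<ge> 2" using A2[OF cs(1) cs(2)] y 1 by simp
    thus False using E4[OF PS cs(1) Pc _ _ R(1) R(2) R(3) R(5) ez] ey 1 hA by simp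
  next
    case 2
    thus False using E3merge[OF PS cs(1) cs(3) _ R(1) R(2) R(4) ez] ey lB by simp
  next
    case 3
    then obtain Q y1 where Q: "Q \<in> S" "Q \<noteq> P" "path_comp E Q" "ham2 Q y y1" "ham2 Q y1 y"
      "y = hd Q \<or> y = last Q"
      using Oe_ham by metis
    show False
    proof (cases "R = Q")
      case True
      have "y = hd R \<or> y = last R" using True Q(6) by simp
      hence "ham2 R y z" using R(6)[OF yz] ham2_sym by blast
      thus False using E2[OF PS cs(1) R(1) R(2) _ ey ez] by blast
    next
      case False
      thus False using E1[OF PS cs(1) Q(1) R(1) Q(2) R(2) _ Q(4) R(5) ey ez] by auto
    qed
  next
    case 4
    then obtain C y1 where C: "C \<in> S" "C \<noteq> P" "cycle_comp E C" "y \<in> set C" "ham2 C y y1"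
      using Cy_ham by blast
    have "C \<noteq> R" using C(3) R(3) pc_not_cc by blast
    thus False using E1[OF PS cs(1) C(1) R(1) C(2) R(2) _ C(5) R(5) ey ez] by auto
  qed
qed

lemma PB:
  assumes cs: "P = A @ [x, x'] @ B" "A \<noteq> []" "B \<noteq> []"
    and y: "last P \<in> Nb x" and z: "z \<in> Nb x'"
  shows "z = last P"
proof (rule ccontr)
  assume zy: "z \<noteq> last P"
  have ey: "E x (last B)" and ez: "E x' z" using NbE y z cs by auto
  consider "z = hd P" | "z = last P" | "Oe z" | "Cy z" using V1_cases NbE[OF z] by blast
  thus False
  proof cases
    case 1
    hence "cycle_comp E P" using E3span[OF PS cs(1) cs(2) cs(3) ey] ez cs by simp
    thus False using Pc pc_not_cc by blast
  next
    case 2 thus False using zy by simp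
  next
    case 3
    then obtain R z1 where R: "R \<in> S" "R \<noteq> P" "path_comp E R" "ham2 R z z1"
      using Oe_ham by metis
    thus False using E3merge[OF PS cs(1) cs(3) ey R(1) R(2) R(4) ez] by simp
  next
    case 4
    then obtain D z1 where D: "D \<in> S" "D \<noteq> P" "ham2 D z z1"
      using Cy_ham by metis
    thus False using E3merge[OF PS cs(1) cs(3) ey D(1) D(2) D(3) ez] by simp
  qed
qed

lemma PA:
  assumes cs: "P = A @ [x, x'] @ B" "A \<noteq> []" "B \<noteq> []"
    and z: "hd P \<in> Nb x'" and y: "y \<in> Nb x"
  shows "y = hd P"
proof (rule ccontr)
  assume yz: "y \<noteq> hd P"
  have ez: "E x' (hd A)" and ey: "E x y" using NbE y z cs by auto
  consider "y = hd P" | "y = last P" | "Oe y" | "Cy y" using V1_cases NbE[OF y] by blast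
  thus False
  proof cases
    case 1 thus False using yz by simp
  next
    case 2
    hence "cycle_comp E P" using E3span[OF PS cs(1) cs(2) cs(3) _ ez] ey cs by simp
    thus False using Pc pc_not_cc by blast
  next
    case 3
    then obtain Q y1 where Q: "Q \<in> S" "Q \<noteq> P" "path_comp E Q" "ham2 Q y y1"
      using Oe_ham by metis
    thus False using E3'merge[OF PS cs(1) cs(2) cs(3) ez Q(1) Q(2) Q(4) ey] by simp
  next
    case 4
    then obtain C y1 where C: "C \<in> S" "C \<noteq> P" "ham2 C y y1"
      using Cy_ham by metis
    thus False using E3'merge[OF PS cs(1) cs(2) cs(3) ez C(1) C(2) C(3) ey] by simp
  qed
qed

lemma PC:
  assumes cs: "P = A @ [x, x'] @ B" "A \<noteq> []" "B \<noteq> []"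
    and y: "y \<in> Nb x" "C \<in> S" "cycle_comp E C" "y \<in> set C"
    and z: "z \<in> Nb x'" "D \<in> S" "cycle_comp E D" "z \<in> set D"
  shows "C = D \<and> (y = z \<or> (y \<notin> adjc C z \<and> z \<notin> adjc C y))"
proof -
  have ey: "E x y" and ez: "E x' z" using NbE y z by auto
  have CP: "C \<noteq> P" "D \<noteq> P" using y z Pc pc_not_cc by auto
  obtain y1 where h1: "ham2 C y y1" using ham_cyc y by blast
  obtain z1 where h2: "ham2 D z z1" using ham_cyc z by blast
  have CD: "C = D"
  proof (rule ccontr)
    assume "C \<noteq> D"
    thus False using E1[OF PS cs(1) y(2) z(2) CP _ h1 ham2_sym[OF h2] ey ez] by blast
  qed
  have "y \<notin> adjc C z"
  proof
    assume "y \<in> adjc C z"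
    hence "ham2 C y z" using adj_ham y(3) by blast
    thus False using E2[OF PS cs(1) y(2) CP(1) _ ey ez] by blast
  qed
  moreover have "z \<notin> adjc C y"
  proof
    assume "z \<in> adjc C y"
    hence "ham2 C y z" using adj_ham y(3) ham2_sym by blast
    thus False using E2[OF PS cs(1) y(2) CP(1) _ ey ez] by blast
  qed
  ultimately show ?thesis using CD by blast
qed

end

context pctx
begin

definition wt :: "'a list \<Rightarrow> real" where
  "wt C = (if length C \<le> 6 then 1 / real (length C) else 0)"

definition w :: "'a \<Rightarrow> real" where
  "w x = (\<Sum>y\<in>Nb x. bweight E S y)"

lemma PE: "is_path E P" using comp_path PS by blast
lemma Pne: "P \<noteq> []" using PE by (simp add: is_path_def)
lemma Pdist: "distinct P" using PE by (simp add: is_path_def)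

lemma end_hd: "end_vertex E S (hd P)" and end_last: "end_vertex E S (last P)"
  unfolding end_vertex_def using PS Pc by blast+

lemma hd_V1: "hd P \<in> V1 E S" and last_V1: "last P \<in> V1 E S"
  using end_hd end_last by (auto simp: V1_def)

lemma Oe_end: "Oe y \<Longrightarrow> end_vertex E S y"
  unfolding Oe_def end_vertex_def by blast

lemma bw_end: "end_vertex E S y \<Longrightarrow> bweight E S y = 2/3"
  by (simp add: bweight_def)

lemma bw_cyc:
  assumes C: "C \<in> S" "cycle_comp E C" "y \<in> set C"
  shows "bweight E S y = wt C"
proof -
  have ne: "\<not> end_vertex E S y"
  proof
    assume "end_vertex E S y"
    then obtain Q where Q: "Q \<in> S" "path_comp E Q" "y = hd Q \<or> y = last Q"
      unfolding end_vertex_def by blast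
    have "Q \<noteq> []" using comp_path[OF Q(1)] by (simp add: is_path_def)
    hence "y \<in> set Q" using Q(3) by auto
    hence "Q = C" using uniq Q(1) C by blast
    thus False using Q(2) C(2) pc_not_cc by blast
  qed
  have some: "(SOME p. p \<in> S \<and> cycle_comp E p \<and> y \<in> set p) = C"
  proof (rule some_equality)
    show "C \<in> S \<and> cycle_comp E C \<and> y \<in> set C" using C by blast
    fix p assume "p \<in> S \<and> cycle_comp E p \<and> y \<in> set p"
    thus "p = C" using uniq C by blast
  qed
  show ?thesis using ne some by (simp add: bweight_def wt_def Let_def)
qed

lemma wt_le: assumes "cycle_comp E C" shows "wt C \<le> 1/3 \<and> wt C \<ge> 0"
proof -
  have "real (length C) \<ge> 3" using assms by (simp add: cycle_comp_def)
  thus ?thesis unfolding wt_def by (auto simp: divide_simps)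
qed

lemma Cy_bw: "Cy y \<Longrightarrow> bweight E S y \<le> 1/3"
  unfolding Cy_def using bw_cyc wt_le by fastforce

lemma Nb_fin: "finite (Nb x)"
proof -
  have "Nb x \<subseteq> V" using NbE EV by blast
  thus ?thesis using finV finite_subset by blast
qed

lemma V2_facts: "x \<in> V2 V E S \<Longrightarrow> x \<in> V \<and> x \<notin> V1 E S \<and> Nb x \<noteq> {}"
  unfolding V2_def Nb_def by blast

lemma deg:
  assumes x: "x \<in> V2 V E S" "x \<in> set P"
  shows "card (Nb x) \<le> 4"
proof -
  obtain i where i: "i < length P" "P ! i = x" using x(2) by (metis in_set_conv_nth)
  have xV1: "x \<notin> V1 E S" using V2_facts[OF x(1)] by blast
  have i0: "i \<noteq> 0" using i xV1 hd_V1 Pne by (metis hd_conv_nth)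
  have i1: "i \<noteq> length P - 1" using i xV1 last_V1 Pne by (metis last_conv_nth)
  define p1 where "p1 = P ! (i - 1)"
  define p2 where "p2 = P ! Suc i"
  have si: "Suc (i - 1) = i" using i0 by simp
  have lt: "Suc i < length P" using i i1 by simp
  have e1: "E x p1" using PE si i unfolding is_path_def p1_def
    by (metis Suc_lessD lt si sym)
  have e2: "E x p2" using PE i lt unfolding is_path_def p2_def by blast
  have n1: "path_nbr E S x p1"
    unfolding path_nbr_def p1_def using PS Pc i si
    by (intro bexI[OF _ PS] conjI exI[of _ "i - 1"]) (auto intro: Pc)
  have n2: "path_nbr E S x p2"
    unfolding path_nbr_def p2_def using PS Pc i lt
    by (intro bexI[OF _ PS] conjI exI[of _ "i"]) (auto intro: Pc)
  have d: "p1 \<noteq> p2" using Pdist lt i0 unfolding p1_def p2_def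
    by (simp add: nth_eq_iff_index_eq)
  have sub: "Nb x \<subseteq> {u. E x u} - {p1, p2}" using NbE n1 n2 by blast
  have fin: "finite {u. E x u}" using EV finV finite_subset by (metis mem_Collect_eq subsetI)
  have c6: "card {u. E x u} = 6" using REG V2_facts[OF x(1)] by (simp add: regular_def)
  have "card ({u. E x u} - {p1, p2}) = 4" using c6 e1 e2 d fin by (simp add: card_Diff_subset)
  thus ?thesis using card_mono[OF _ sub] fin by simp
qed

lemma w_split:
  "w x = (\<Sum>y\<in>Nb x \<inter> {hd P, last P}. bweight E S y) + (\<Sum>y\<in>Nb x - {hd P, last P}. bweight E S y)"
  unfolding w_def using Nb_fin by (simp add: sum.Int_Diff)

lemma w_ends: "(\<Sum>y\<in>Nb x \<inter> {hd P, last P}. bweight E S y) = 2/3 * card (Nb x \<inter> {hd P, last P})"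
proof -
  have "(\<Sum>y\<in>Nb x \<inter> {hd P, last P}. bweight E S y) = (\<Sum>y\<in>Nb x \<inter> {hd P, last P}. 2/3)"
    by (rule sum.cong) (use bw_end end_hd end_last in auto)
  thus ?thesis by simp
qed

lemma c12: "card (Nb x \<inter> {hd P, last P}) \<le> 2"
proof -
  have "card (Nb x \<inter> {hd P, last P}) \<le> card {hd P, last P}" by (rule card_mono) auto
  also have "\<dots> \<le> 2" by (simp add: card_insert_if)
  finally show ?thesis .
qed

lemma rest_Cy: "\<forall>y\<in>Nb x. \<not> Oe y \<Longrightarrow> y \<in> Nb x - {hd P, last P} \<Longrightarrow> Cy y"
  using V1_cases NbE by blast

lemma Wgen:
  assumes x: "x \<in> V2 V E S" "x \<in> set P" and nO: "\<forall>y\<in>Nb x. \<not> Oe y"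
  shows "w x \<le> 2"
proof -
  let ?c1 = "card (Nb x \<inter> {hd P, last P})" let ?c2 = "card (Nb x - {hd P, last P})"
  have "(\<Sum>y\<in>Nb x - {hd P, last P}. bweight E S y) \<le> (\<Sum>y\<in>Nb x - {hd P, last P}. 1/3)"
    by (rule sum_mono) (use rest_Cy[OF nO] Cy_bw in blast)
  hence r: "(\<Sum>y\<in>Nb x - {hd P, last P}. bweight E S y) \<le> ?c2 / 3" by simp
  have cs: "?c1 + ?c2 = card (Nb x)" using card_Int_Diff[OF Nb_fin] by simp
  have c1: "?c1 \<le> 2" using c12 .
  have c4: "?c1 + ?c2 \<le> 4" using cs deg[OF x] by simp
  have "w x \<le> 2/3 * ?c1 + ?c2 / 3" using w_split[of x] w_ends[of x] r by simp
  also have "\<dots> \<le> 2" using c1 c4 by linarith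
  finally show ?thesis .
qed

lemma Wcyc:
  assumes nO: "\<forall>y\<in>Nb x. \<not> Oe y"
   and C: "C \<in> S" "cycle_comp E C" "z \<in> set C"
   and cyc: "\<forall>y\<in>Nb x. Cy y \<longrightarrow> y \<in> set C \<and> y \<notin> adjc C z"
  shows "w x \<le> 2/3 * card (Nb x \<inter> {hd P, last P}) + 2/3"
proof -
  let ?R = "Nb x - {hd P, last P}"
  have sub: "?R \<subseteq> set C - adjc C z" using cyc rest_Cy[OF nO] by blast
  have eq: "(\<Sum>y\<in>?R. bweight E S y) = (\<Sum>y\<in>?R. wt C)"
    by (rule sum.cong) (use sub bw_cyc[OF C(1) C(2)] in auto)
  have dC: "distinct C" using comp_path[OF C(1)] by (simp add: is_path_def)
  have "card (set C - adjc C z) = length C - 2"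
    using adjc_card[OF C(2) C(3)] dC card_Diff_subset[of "adjc C z" "set C"] distinct_card[OF dC]
      finite_subset[OF _ finite_set] by metis
  hence c2: "card ?R \<le> length C - 2" using card_mono[OF _ sub] by (metis finite_Diff finite_set)
  have L3: "length C \<ge> 3" using C(2) by (simp add: cycle_comp_def)
  have "real (card ?R) * wt C \<le> 2/3"
  proof (cases "length C \<le> 6")
    case True
    have "real (card ?R) \<le> real (length C) - 2" using c2 L3 by linarith
    moreover have "real (length C) > 0" using L3 by (cases C) auto
    ultimately have "real (card ?R) / real (length C) \<le> (real (length C) - 2) / real (length C)"
      by (simp add: divide_right_mono)
    also have "\<dots> \<le> 2/3" using True L3 by (simp add: divide_simps)
    finally show ?thesis using True by (simp add: wt_def)
  next
    case False thus ?thesis by (simp add: wt_def)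
  qed
  thus ?thesis using w_split[of x] w_ends[of x] eq by simp
qed

lemma b_dec:
  assumes "Y \<subseteq> V2 V E S" "finite Y"
  shows "b V E S Y = (\<Sum>x\<in>Y. w x)"
proof -
  have "{(x, y). x \<in> Y \<and> y \<in> V1 E S \<and> balanced V E S x y} = Sigma Y Nb"
    using assms(1) V2_facts unfolding Nb_def balanced_def by blast
  hence "b V E S Y = (\<Sum>(x, y)\<in>Sigma Y Nb. bweight E S y)" by (simp add: b_def)
  also have "\<dots> = (\<Sum>x\<in>Y. \<Sum>y\<in>Nb x. bweight E S y)"
    using sum.Sigma[OF assms(2), of Nb "\<lambda>x y. bweight E S y"] Nb_fin by simp
  finally show ?thesis by (simp add: w_def)
qed

end

context ctx
begin

lemma adjc_irr:
  assumes "cycle_comp E C"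
  shows "z \<notin> adjc C z"
proof
  assume "z \<in> adjc C z"
  let ?c = "cyc_of C" let ?L = "length (cyc_of C)"
  have cp: "cycprop E ?c" using cyc_of(1)[OF assms] .
  have L3: "?L \<ge> 3" and dc: "distinct ?c" using cp by (auto simp: cycprop_def)
  obtain j where j: "j < ?L" "?c ! j = z"
    "z = ?c ! (Suc j mod ?L) \<or> z = ?c ! ((j + (?L - 1)) mod ?L)"
    using \<open>z \<in> adjc C z\<close> unfolding adjc_def by blast
  have L0: "0 < ?L" using L3 by linarith
  have b1: "Suc j mod ?L < ?L" "(j + (?L - 1)) mod ?L < ?L" using L0 by (rule mod_less_divisor)+
  have i1: "Suc j mod ?L = (if Suc j = ?L then 0 else Suc j)" using j(1) by auto
  have i2: "(j + (?L - 1)) mod ?L = (if j = 0 then ?L - 1 else j - 1)"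
  proof (cases "j = 0")
    case True thus ?thesis using L3 by simp
  next
    case False
    have "j + (?L - 1) = (j - 1) + ?L" using False L3 by simp
    hence "(j + (?L - 1)) mod ?L = (j - 1) mod ?L" by simp
    thus ?thesis using False j(1) by simp
  qed
  have n1: "Suc j mod ?L \<noteq> j" unfolding i1 using L3 j(1) by auto
  have n2: "(j + (?L - 1)) mod ?L \<noteq> j" unfolding i2 using L3 j(1) by auto
  show False using j(2,3) n1 n2 b1 j(1) dc nth_eq_iff_index_eq by metis
qed

end

context pctx
begin

lemma as_bs_ne:
  assumes "P = as @ X @ bs" "X \<noteq> []" "set X \<subseteq> V2 V E S"
  shows "as \<noteq> []" "bs \<noteq> []"
proof -
  have "hd X \<in> V2 V E S" "last X \<in> V2 V E S" using assms(2,3) by auto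
  hence "hd X \<notin> V1 E S" "last X \<notin> V1 E S" using V2_facts by auto
  thus "as \<noteq> []" "bs \<noteq> []" using hd_V1 last_V1 assms(1,2) by auto
qed

lemma X_cons:
  assumes "P = as @ X @ bs" "set X \<subseteq> V2 V E S" "Suc j < length X"
  shows "P = (as @ take j X) @ [X!j, X!Suc j] @ (drop (Suc (Suc j)) X @ bs)"
    "as @ take j X \<noteq> []" "drop (Suc (Suc j)) X @ bs \<noteq> []"
proof -
  have ne: "X \<noteq> []" using assms(3) by auto
  have "take j X @ X!j # X!Suc j # drop (Suc (Suc j)) X = X"
    using assms(3) by (simp add: Cons_nth_drop_Suc)
  thus "P = (as @ take j X) @ [X!j, X!Suc j] @ (drop (Suc (Suc j)) X @ bs)"
    using assms(1) by (metis append.assoc append_Cons append_Nil)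
  show "as @ take j X \<noteq> []" "drop (Suc (Suc j)) X @ bs \<noteq> []"
    using as_bs_ne[OF assms(1) ne assms(2)] by auto
qed

lemma X_V2: "set X \<subseteq> V2 V E S \<Longrightarrow> j < length X \<Longrightarrow> X!j \<in> V2 V E S"
  by (meson nth_mem subsetD)

lemma X_P: "P = as @ X @ bs \<Longrightarrow> j < length X \<Longrightarrow> X!j \<in> set P"
  by simp

lemma Nb_ne: "set X \<subseteq> V2 V E S \<Longrightarrow> j < length X \<Longrightarrow> Nb (X!j) \<noteq> {}"
  using V2_facts X_V2 by blast

lemma sum_X:
  assumes "P = as @ X @ bs"
  shows "(\<Sum>x\<in>set X. w x) = (\<Sum>j<length X. w (X!j))"
proof -
  have "distinct X" using Pdist assms by simp
  hence "(\<Sum>x\<in>set X. w x) = sum_list (map w X)" by (simp add: sum.distinct_set_conv_list)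
  also have "\<dots> = (\<Sum>j<length X. w (X!j))" by (simp add: sum_list_sum_nth atLeast0LessThan)
  finally show ?thesis .
qed

lemma caseO:
  assumes X: "P = as @ X @ bs" "set X \<subseteq> V2 V E S" "length X \<ge> 2"
    and i: "i < length X" "y \<in> Nb (X!i)" "Oe y"
  shows "(\<Sum>x\<in>set X. w x) \<le> 2/3 * (real (length X) + 2)"
proof -
  let ?k = "length X"
  have R: "\<forall>d. i + d < ?k \<longrightarrow> y \<in> Nb (X!(i+d))"
  proof
    fix d show "i + d < ?k \<longrightarrow> y \<in> Nb (X!(i+d))"
    proof (induction d)
      case 0 thus ?case using i by simp
    next
      case (Suc d)
      show ?case
      proof
        assume lt: "i + Suc d < ?k"
        hence y1: "y \<in> Nb (X!(i+d))" using Suc by simp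
        have c: "Suc (i+d) < ?k" using lt by simp
        note cs = X_cons[OF X(1) X(2) c]
        have "\<forall>z\<in>Nb (X!Suc (i+d)). z = y" using PO1[OF cs y1 i(3)] by blast
        moreover have "Nb (X!Suc (i+d)) \<noteq> {}" using Nb_ne[OF X(2)] c by blast
        ultimately show "y \<in> Nb (X!(i + Suc d))" by auto
      qed
    qed
  qed
  have L: "\<forall>d. d \<le> i \<longrightarrow> y \<in> Nb (X!(i-d))"
  proof
    fix d show "d \<le> i \<longrightarrow> y \<in> Nb (X!(i-d))"
    proof (induction d)
      case 0 thus ?case using i by simp
    next
      case (Suc d)
      show ?case
      proof
        assume le: "Suc d \<le> i"
        hence y1: "y \<in> Nb (X!(i-d))" using Suc by simp
        have e: "Suc (i - Suc d) = i - d" using le by simp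
        have c: "Suc (i - Suc d) < ?k" using e i(1) by simp
        note cs = X_cons[OF X(1) X(2) c]
        have y2: "y \<in> Nb (X!Suc (i - Suc d))" using y1 e by simp
        have "\<forall>z\<in>Nb (X!(i - Suc d)). z = y" using PO2[OF cs y2 i(3)] by blast
        moreover have "Nb (X!(i - Suc d)) \<noteq> {}" using Nb_ne[OF X(2)] i(1) by simp
        ultimately show "y \<in> Nb (X!(i - Suc d))" by auto
      qed
    qed
  qed
  have all: "y \<in> Nb (X!j)" if "j < ?k" for j
  proof (cases "i \<le> j")
    case True thus ?thesis using R[rule_format, of "j - i"] that by simp
  next
    case False thus ?thesis using L[rule_format, of "i - j"] by simp
  qed
  have one: "Nb (X!j) = {y}" if j: "j < ?k" for j
  proof -
    have "\<forall>z\<in>Nb (X!j). z = y"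
    proof (cases "Suc j < ?k")
      case True
      note cs = X_cons[OF X(1) X(2) True]
      show ?thesis using PO2[OF cs all[OF True] i(3)] by blast
    next
      case False
      hence jj: "Suc (j - 1) = j" "Suc (j - 1) < ?k" "j - 1 < ?k" using j X(3) by auto
      note cs = X_cons[OF X(1) X(2) jj(2)]
      show ?thesis using PO1[OF cs all[OF jj(3)] i(3)] jj(1) by simp
    qed
    thus ?thesis using all[OF j] by blast
  qed
  have "(\<Sum>x\<in>set X. w x) = (\<Sum>j<?k. w (X!j))" using sum_X[OF X(1)] .
  also have "\<dots> = (\<Sum>j<?k. 2/3)"
    by (rule sum.cong) (use one bw_end Oe_end[OF i(3)] in \<open>auto simp: w_def\<close>)
  also have "\<dots> \<le> 2/3 * (real ?k + 2)" by simp
  finally show ?thesis .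
qed

lemma single1: "\<forall>y\<in>A. y = c \<Longrightarrow> A \<noteq> {} \<Longrightarrow> A = {c}" by auto
lemma single2: "\<forall>y\<in>A. y = c \<Longrightarrow> A \<noteq> {} \<Longrightarrow> c \<in> A" by auto

lemma final:
  assumes H: "P = as @ X @ bs" "set X \<subseteq> V2 V E S" "length X \<ge> 2" "\<forall>x\<in>set X. \<forall>y\<in>Nb x. \<not> Oe y"
    and nA: "Nb (X!0) \<noteq> {hd P}" and nB: "Nb (X!(length X - 1)) \<noteq> {last P}"
  shows "(\<Sum>x\<in>set X. w x) \<le> 2/3 * (real (length X) + 2)"
proof -
  let ?k = "length X"
  have nO: "\<And>j y. j < ?k \<Longrightarrow> y \<in> Nb (X!j) \<Longrightarrow> \<not> Oe y" using H(4) nth_mem by blast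
  have ne: "\<And>j. j < ?k \<Longrightarrow> Nb (X!j) \<noteq> {}" using Nb_ne[OF H(2)] by blast
  have cA: "\<forall>j. Suc j < ?k \<longrightarrow> hd P \<notin> Nb (X!Suc j)"
  proof
    fix j show "Suc j < ?k \<longrightarrow> hd P \<notin> Nb (X!Suc j)"
    proof (induction j)
      case 0
      show ?case
      proof (intro impI notI)
        assume lt: "Suc 0 < ?k" and h: "hd P \<in> Nb (X!Suc 0)"
        note cs = X_cons[OF H(1) H(2) lt]
        have "\<forall>y\<in>Nb (X!0). y = hd P" using PA[OF cs h] by blast
        moreover have "Nb (X!0) \<noteq> {}" using ne[of 0] lt by linarith
        ultimately have "Nb (X!0) = {hd P}" by (rule single1)
        thus False using nA by simp
      qed
    next
      case (Suc j)
      show ?case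
      proof (intro impI notI)
        assume lt: "Suc (Suc j) < ?k" and h: "hd P \<in> Nb (X!Suc (Suc j))"
        note cs = X_cons[OF H(1) H(2) lt]
        have "\<forall>y\<in>Nb (X!Suc j). y = hd P" using PA[OF cs h] by blast
        moreover have "Nb (X!Suc j) \<noteq> {}" using ne[of "Suc j"] lt by linarith
        ultimately have "hd P \<in> Nb (X!Suc j)" by (rule single2)
        thus False using Suc lt by simp
      qed
    qed
  qed
  have hA: "\<And>j. j < ?k \<Longrightarrow> j \<noteq> 0 \<Longrightarrow> hd P \<notin> Nb (X!j)"
    using cA by (metis not0_implies_Suc)
  have cB: "\<forall>d. d + 2 \<le> ?k \<longrightarrow> last P \<notin> Nb (X!(?k - 2 - d))"
  proof
    fix d show "d + 2 \<le> ?k \<longrightarrow> last P \<notin> Nb (X!(?k - 2 - d))"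
    proof (induction d)
      case 0
      show ?case
      proof (intro impI notI)
        assume le: "0 + 2 \<le> ?k" and h: "last P \<in> Nb (X!(?k - 2 - 0))"
        have lt: "Suc (?k - 2) < ?k" using le by simp
        note cs = X_cons[OF H(1) H(2) lt]
        have "\<forall>y\<in>Nb (X!Suc (?k - 2)). y = last P" using PB[OF cs] h by simp
        moreover have "Suc (?k - 2) = ?k - 1" using le by simp
        ultimately have "Nb (X!(?k - 1)) = {last P}" using ne[of "?k - 1"] le by fastforce
        thus False using nB by simp
      qed
    next
      case (Suc d)
      show ?case
      proof (intro impI notI)
        assume le: "Suc d + 2 \<le> ?k" and h: "last P \<in> Nb (X!(?k - 2 - Suc d))"
        have e: "Suc (?k - 2 - Suc d) = ?k - 2 - d" using le by simp
        have lt: "Suc (?k - 2 - Suc d) < ?k" using le by simp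
        note cs = X_cons[OF H(1) H(2) lt]
        have "\<forall>y\<in>Nb (X!Suc (?k - 2 - Suc d)). y = last P" using PB[OF cs h] by blast
        hence "last P \<in> Nb (X!(?k - 2 - d))" using ne[of "?k - 2 - d"] le e by fastforce
        thus False using Suc le by simp
      qed
    qed
  qed
  have hB: "\<And>j. j < ?k \<Longrightarrow> j \<noteq> ?k - 1 \<Longrightarrow> last P \<notin> Nb (X!j)"
  proof -
    fix j assume j: "j < ?k" "j \<noteq> ?k - 1"
    have "?k - 2 - (?k - 2 - j) = j" using j by simp
    moreover have "(?k - 2 - j) + 2 \<le> ?k" using j by simp
    ultimately show "last P \<notin> Nb (X!j)" using cB[rule_format, of "?k - 2 - j"] by simp
  qed
  have cC: "\<And>j. j < ?k \<Longrightarrow> \<exists>y\<in>Nb (X!j). Cy y"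
  proof (rule ccontr)
    fix j assume j: "j < ?k" and nc: "\<not> (\<exists>y\<in>Nb (X!j). Cy y)"
    have sub: "Nb (X!j) \<subseteq> {hd P, last P}"
      using nc nO[OF j] V1_cases NbE by blast
    show False
    proof (cases "j = 0")
      case True
      hence "Nb (X!j) \<subseteq> {hd P}" using sub hB[OF j] H(3) by auto
      hence "Nb (X!0) = {hd P}" using ne[OF j] True by blast
      thus False using nA by simp
    next
      case False
      note F = False
      show False
      proof (cases "j = ?k - 1")
        case True
        hence "Nb (X!j) \<subseteq> {last P}" using sub hA[OF j F] by auto
        hence "Nb (X!(?k - 1)) = {last P}" using ne[OF j] True by blast
        thus False using nB by simp
      next
        case False
        hence "Nb (X!j) = {}" using sub hA[OF j F] hB[OF j] by auto
        thus False using ne[OF j] by simp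
      qed
    qed
  qed
  have cyc_ok: "\<exists>D z. D \<in> S \<and> cycle_comp E D \<and> z \<in> set D \<and>
      (\<forall>y\<in>Nb (X!j). Cy y \<longrightarrow> y \<in> set D \<and> y \<notin> adjc D z)" if j: "j < ?k" for j
  proof (cases "Suc j < ?k")
    case True
    note cs = X_cons[OF H(1) H(2) True]
    obtain z where z: "z \<in> Nb (X!Suc j)" "Cy z" using cC[OF True] by blast
    then obtain D where D: "D \<in> S" "cycle_comp E D" "z \<in> set D" unfolding Cy_def by blast
    have "\<forall>y\<in>Nb (X!j). Cy y \<longrightarrow> y \<in> set D \<and> y \<notin> adjc D z"
    proof (intro ballI impI)
      fix y assume y: "y \<in> Nb (X!j)" "Cy y"
      then obtain C where C: "C \<in> S" "cycle_comp E C" "y \<in> set C" unfolding Cy_def by blast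
      have r: "C = D \<and> (y = z \<or> (y \<notin> adjc C z \<and> z \<notin> adjc C y))"
        using PC[OF cs y(1) C z(1) D] .
      thus "y \<in> set D \<and> y \<notin> adjc D z" using C(3) adjc_irr[OF D(2), of z] by auto
    qed
    thus ?thesis using D by blast
  next
    case False
    hence jj: "Suc (j - 1) = j" "Suc (j - 1) < ?k" "j - 1 < ?k" using j H(3) by auto
    note cs = X_cons[OF H(1) H(2) jj(2)]
    obtain z where z: "z \<in> Nb (X!(j - 1))" "Cy z" using cC[OF jj(3)] by blast
    then obtain D where D: "D \<in> S" "cycle_comp E D" "z \<in> set D" unfolding Cy_def by blast
    have "\<forall>y\<in>Nb (X!j). Cy y \<longrightarrow> y \<in> set D \<and> y \<notin> adjc D z"
    proof (intro ballI impI)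
      fix y assume y: "y \<in> Nb (X!j)" "Cy y"
      then obtain C where C: "C \<in> S" "cycle_comp E C" "y \<in> set C" unfolding Cy_def by blast
      have y': "y \<in> Nb (X!Suc (j - 1))" using y jj(1) by simp
      have r: "D = C \<and> (z = y \<or> (z \<notin> adjc D y \<and> y \<notin> adjc D z))"
        using PC[OF cs z(1) D y' C] .
      thus "y \<in> set D \<and> y \<notin> adjc D z" using C(3) adjc_irr[OF D(2), of z] by auto
    qed
    thus ?thesis using D by blast
  qed
  have wb: "w (X!j) \<le> 2/3 + (if j = 0 then 2/3 else 0) + (if j = ?k - 1 then 2/3 else 0)"
    if j: "j < ?k" for j
  proof -
    obtain D z where Dz: "D \<in> S" "cycle_comp E D" "z \<in> set D"
      "\<forall>y\<in>Nb (X!j). Cy y \<longrightarrow> y \<in> set D \<and> y \<notin> adjc D z" using cyc_ok[OF j] by blast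
    have nOj: "\<forall>y\<in>Nb (X!j). \<not> Oe y" using nO[OF j] by blast
    have w1: "w (X!j) \<le> 2/3 * card (Nb (X!j) \<inter> {hd P, last P}) + 2/3"
      using Wcyc[OF nOj Dz(1) Dz(2) Dz(3) Dz(4)] .
    have sub: "Nb (X!j) \<inter> {hd P, last P} \<subseteq>
        (if j = 0 then {hd P} else {}) \<union> (if j = ?k - 1 then {last P} else {})"
      using hA[OF j] hB[OF j] by auto
    have "card (Nb (X!j) \<inter> {hd P, last P}) \<le>
        card ((if j = 0 then {hd P} else {}) \<union> (if j = ?k - 1 then {last P} else {}))"
      by (rule card_mono[OF _ sub]) simp
    also have "\<dots> \<le> card (if j = 0 then {hd P} else {}) + card (if j = ?k - 1 then {last P} else {})"
      by (rule card_Un_le)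
    also have "\<dots> = (if j = 0 then 1 else 0) + (if j = ?k - 1 then 1 else 0)" by simp
    finally have "real (card (Nb (X!j) \<inter> {hd P, last P})) \<le>
        (if j = 0 then 1 else 0) + (if j = ?k - 1 then 1 else 0)" by (simp split: if_splits)
    thus ?thesis using w1 by (simp split: if_splits)
  qed
  have "(\<Sum>x\<in>set X. w x) = (\<Sum>j<?k. w (X!j))" using sum_X[OF H(1)] .
  also have "\<dots> \<le> (\<Sum>j<?k. 2/3 + (if j = 0 then 2/3 else 0) + (if j = ?k - 1 then 2/3 else 0))"
    by (rule sum_mono) (use wb in simp)
  also have "\<dots> = 2/3 * real ?k + 2/3 + 2/3"
  proof -
    have hX: "X \<noteq> []" using H(3) by auto
    thus ?thesis using H(3) by (simp add: sum.distrib)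
  qed
  finally show ?thesis by (simp add: algebra_simps)
qed

lemma noO:
  "\<forall>X as bs. length X = n \<longrightarrow> P = as @ X @ bs \<longrightarrow> set X \<subseteq> V2 V E S \<longrightarrow> n \<ge> 2 \<longrightarrow>
     (\<forall>x\<in>set X. \<forall>y\<in>Nb x. \<not> Oe y) \<longrightarrow> (\<Sum>x\<in>set X. w x) \<le> 2/3 * (real n + 2)"
proof (induction n rule: less_induct)
  case (less n)
  show ?case
  proof (intro allI impI)
    fix X as bs
    assume H: "length X = n" "P = as @ X @ bs" "set X \<subseteq> V2 V E S" "n \<ge> 2"
      "\<forall>x\<in>set X. \<forall>y\<in>Nb x. \<not> Oe y"
    have dX: "distinct X" using Pdist H(2) by simp
    show "(\<Sum>x\<in>set X. w x) \<le> 2/3 * (real n + 2)"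
    proof (cases "Nb (X!0) = {hd P}")
      case True
      obtain x X' where X: "X = x # X'" using H(1,4) by (cases X) auto
      have xn: "x \<notin> set X'" using dX X by simp
      have sum: "(\<Sum>x\<in>set X. w x) = w x + (\<Sum>x\<in>set X'. w x)" using X xn by simp
      have wx: "w x = 2/3" using True X bw_end[OF end_hd] by (simp add: w_def)
      have lX': "length X' = n - 1" using X H(1) by simp
      show ?thesis
      proof (cases "length X' \<ge> 2")
        case True
        have P': "P = (as @ [x]) @ X' @ bs" using H(2) X by simp
        have "(\<Sum>x\<in>set X'. w x) \<le> 2/3 * (real (length X') + 2)"
          using less.IH[rule_format, of "length X'" X' "as @ [x]" bs] P' H(3,5) True X lX' H(4)
          by auto
        moreover have "real (length X') = real n - 1" using lX' H(4) by (simp add: of_nat_diff)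
        ultimately show ?thesis using sum wx by simp
      next
        case False
        hence "length X' = 1" using lX' H(4) by simp
        then obtain x' where x': "X' = [x']" by (cases X') auto
        have "x' \<in> V2 V E S" "x' \<in> set P" using H(2,3) X x' by auto
        moreover have "\<forall>y\<in>Nb x'. \<not> Oe y" using H(5) X x' by auto
        ultimately have "w x' \<le> 2" using Wgen by blast
        moreover have "n = 2" using X x' H(1) by simp
        ultimately show ?thesis using sum wx x' xn by simp
      qed
    next
      case nA: False
      show ?thesis
      proof (cases "Nb (X!(length X - 1)) = {last P}")
        case True
        obtain X' x where X: "X = X' @ [x]" using H(1,4) by (cases X rule: rev_cases) auto
        have xn: "x \<notin> set X'" using dX X by simp
        have sum: "(\<Sum>x\<in>set X. w x) = w x + (\<Sum>x\<in>set X'. w x)" using X xn by simp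
        have "X!(length X - 1) = x" using X by simp
        hence wx: "w x = 2/3" using True bw_end[OF end_last] by (simp add: w_def)
        have lX': "length X' = n - 1" using X H(1) by simp
        show ?thesis
        proof (cases "length X' \<ge> 2")
          case True
          have P': "P = as @ X' @ ([x] @ bs)" using H(2) X by simp
          have "(\<Sum>x\<in>set X'. w x) \<le> 2/3 * (real (length X') + 2)"
            using less.IH[rule_format, of "length X'" X' as "[x] @ bs"] P' H(3,5) True X lX' H(4)
            by auto
          moreover have "real (length X') = real n - 1" using lX' H(4) by (simp add: of_nat_diff)
          ultimately show ?thesis using sum wx by simp
        next
          case False
          hence "length X' = 1" using lX' H(4) by simp
          then obtain x' where x': "X' = [x']" by (cases X') auto
          have "x' \<in> V2 V E S" "x' \<in> set P" using H(2,3) X x' by auto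
          moreover have "\<forall>y\<in>Nb x'. \<not> Oe y" using H(5) X x' by auto
          ultimately have "w x' \<le> 2" using Wgen by blast
          moreover have "n = 2" using X x' H(1) by simp
          ultimately show ?thesis using sum wx x' xn by simp
        qed
      next
        case False
        thus ?thesis using final[OF H(2) H(3) _ H(5) nA False] H(1,4) by simp
      qed
    qed
  qed
qed

end

theorem lemma8_main:
  fixes V :: "'a set" and E :: "'a \<Rightarrow> 'a \<Rightarrow> bool" and S :: "'a list set"
    and P X :: "'a list" and k :: nat
  assumes "graph V E" and "regular V E 6" and "canonical V E S"
    and "P \<in> S" and "path_comp E P"
    and "\<exists>as bs. P = as @ X @ bs" and "length X = k" and "k \<ge> 2"
    and "set X \<subseteq> V2b V E S"
    and "\<forall>x\<in>set X. \<forall>v. free_edge E S x v \<longrightarrow> \<not> dangerous V E S v"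
  shows "b V E S (set X) \<le> 2/3 * (real k + 2)"
proof -
  interpret pctx V E S P using assms(1-5) by unfold_locales auto
  obtain as bs where X: "P = as @ X @ bs" using assms(6) by blast
  have V2: "set X \<subseteq> V2 V E S" using assms(9) by (auto simp: V2b_def)
  have "b V E S (set X) = (\<Sum>x\<in>set X. w x)" using b_dec[OF V2] by simp
  also have "\<dots> \<le> 2/3 * (real k + 2)"
  proof (cases "\<exists>i<length X. \<exists>y\<in>Nb (X!i). Oe y")
    case True
    then obtain i y where i: "i < length X" "y \<in> Nb (X!i)" "Oe y" by blast
    show ?thesis using caseO[OF X V2 _ i] assms(7,8) by simp
  next
    case False
    hence nO: "\<forall>x\<in>set X. \<forall>y\<in>Nb x. \<not> Oe y" by (metis in_set_conv_nth)
    have "(\<Sum>x\<in>set X. w x) \<le> 2/3 * (real (length X) + 2)"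
      using noO[of "length X"] X V2 nO assms(7,8) by blast
    thus ?thesis using assms(7) by simp
  qed
  finally show ?thesis .
qed

theorem lemma8:
  fixes V :: "'a set" and E :: "'a \<Rightarrow> 'a \<Rightarrow> bool" and S :: "'a list set"
    and P X :: "'a list" and k :: nat
  assumes "graph V E" and "regular V E 6" and "canonical V E S"
    and "P \<in> S" and "path_comp E P"
    and "\<exists>as bs. P = as @ X @ bs" and "length X = k" and "k \<ge> 2"
    and "set X \<subseteq> V2b V E S"
    and "\<forall>x\<in>set X. \<forall>v. free_edge E S x v \<longrightarrow> \<not> dangerous V E S v"
  shows "b V E S (set X) \<le> 2/3 * (real k + 2)"
    using lemma8_main[OF assms] .

end
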